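(* Let $d\ge 3$ and $r$ be integers and let $F$ be a general form of degree $d$ in three variables. If $r\geq d+2$, then there exists a star configuration $\mathbb{X}(r)\subset\mathbb{P}^2$ apolar to $F$. If $r\leq d$, then there does not exist a star configuration $\mathbb{X}(r)$ apolar to $F$.
   Context: Let $S=\mathbb{C}[x_0,x_1,x_2]$ and $T=\mathbb{C}[y_0,y_1,y_2]$, where $T$ acts on $S$ by differentiation, $y_j=\partial/\partial x_j$. For a form $F\in S$, $F^\perp=\{\partial\in T:\partial F=0\}$. A finite set of points $\mathbb{X}\subset\mathbb{P}^2=\mathbb{P}(S_1)$ with defining ideal $I(\mathbb{X})\subseteq T$ is apolar to $F$ if $I(\mathbb{X})\subseteq F^\perp$. A star configuration $\mathbb{X}(r)\subset\mathbb{P}^2$: take $r$ linear forms $l_1,\dots,l_r\in T_1$ such that any $3$ of them are linearly independent; $\mathbb{X}(r)$ is the set of $\binom{r}{2}$ pairwise intersection points of the lines $\{l_i=0\}$. "$F$ general" means $F$ ranges over a suitable nonempty Zariski open subset of the space of degree $d$ ternary forms. *)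

theory Defs
  imports Complex_Main
begin

text \<open>A monomial x0^a x1^b x2^c (resp. y0^a y1^b y2^c) is encoded by its
exponent triple (a,b,c); a form is its coefficient function (homogeneous of degree e:
coefficients vanish outside total degree e). Points of P^2 are represented by nonzero
vectors of C^3 (a finite set of projective points by its punctured affine cone).\<close>

type_synonym mon = "nat \<times> nat \<times> nat"
type_synonym form = "mon \<Rightarrow> complex"
type_synonym pt = "complex \<times> complex \<times> complex"

definition mdeg :: "mon \<Rightarrow> nat" where
  "mdeg m = (case m of (a, b, c) \<Rightarrow> a + b + c)"

definition monos_of :: "nat \<Rightarrow> mon set" where
  "monos_of e = {m. mdeg m = e}"

definition homog :: "nat \<Rightarrow> form \<Rightarrow> bool" where
  "homog e f \<longleftrightarrow> (\<forall>m. mdeg m \<noteq> e \<longrightarrow> f m = 0)"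

fun mon_eval :: "mon \<Rightarrow> pt \<Rightarrow> complex" where
  "mon_eval (a, b, c) (x, y, z) = x ^ a * y ^ b * z ^ c"

definition heval :: "nat \<Rightarrow> form \<Rightarrow> pt \<Rightarrow> complex" where
  "heval e g v = (\<Sum>m\<in>monos_of e. g m * mon_eval m v)"

fun madd :: "mon \<Rightarrow> mon \<Rightarrow> mon" where
  "madd (a, b, c) (a', b', c') = (a + a', b + b', c + c')"

text \<open>d^alpha/dx^alpha applied to x^(alpha+gamma) equals dcoef alpha gamma times x^gamma.\<close>
fun dcoef :: "mon \<Rightarrow> mon \<Rightarrow> complex" where
  "dcoef (a, b, c) (a', b', c') =
     (fact (a + a') / fact a') * (fact (b + b') / fact b') * (fact (c + c') / fact c')"

text \<open>Apolar action: g (of degree e in T, y_j = d/dx_j) acting on F by differentiation.\<close>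
definition contract :: "nat \<Rightarrow> form \<Rightarrow> form \<Rightarrow> form" where
  "contract e g F = (\<lambda>\<gamma>. \<Sum>\<alpha>\<in>monos_of e. g \<alpha> * dcoef \<alpha> \<gamma> * F (madd \<alpha> \<gamma>))"

text \<open>X apolar to F: I(X) \<subseteq> F^perp, checked degree by degree (both are homogeneous).\<close>
definition apolar :: "pt set \<Rightarrow> form \<Rightarrow> bool" where
  "apolar X F \<longleftrightarrow>
     (\<forall>e g. homog e g \<longrightarrow> (\<forall>v\<in>X. heval e g v = 0) \<longrightarrow> contract e g F = (\<lambda>_. 0))"

fun dot3 :: "pt \<Rightarrow> pt \<Rightarrow> complex" where
  "dot3 (a, b, c) (x, y, z) = a * x + b * y + c * z"

fun smul3 :: "complex \<Rightarrow> pt \<Rightarrow> pt" where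
  "smul3 t (x, y, z) = (t * x, t * y, t * z)"

fun add3 :: "pt \<Rightarrow> pt \<Rightarrow> pt" where
  "add3 (a, b, c) (x, y, z) = (a + x, b + y, c + z)"

definition indep2 :: "pt \<Rightarrow> pt \<Rightarrow> bool" where
  "indep2 u v \<longleftrightarrow> (\<forall>a b. add3 (smul3 a u) (smul3 b v) = (0, 0, 0) \<longrightarrow> a = 0 \<and> b = 0)"

definition indep3 :: "pt \<Rightarrow> pt \<Rightarrow> pt \<Rightarrow> bool" where
  "indep3 u v w \<longleftrightarrow> (\<forall>a b c. add3 (add3 (smul3 a u) (smul3 b v)) (smul3 c w) = (0, 0, 0)
      \<longrightarrow> a = 0 \<and> b = 0 \<and> c = 0)"

text \<open>r linear forms l 0, ..., l (r-1) in T_1 (coefficient vectors), any three linearly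
independent (and any two, which only matters for r = 2).\<close>
definition star_lines :: "nat \<Rightarrow> (nat \<Rightarrow> pt) \<Rightarrow> bool" where
  "star_lines r l \<longleftrightarrow>
     (\<forall>i<r. \<forall>j<r. \<forall>k<r. i \<noteq> j \<and> j \<noteq> k \<and> i \<noteq> k \<longrightarrow> indep3 (l i) (l j) (l k)) \<and>
     (\<forall>i<r. \<forall>j<r. i \<noteq> j \<longrightarrow> indep2 (l i) (l j))"

definition star_points :: "nat \<Rightarrow> (nat \<Rightarrow> pt) \<Rightarrow> pt set" where
  "star_points r l = {v. v \<noteq> (0, 0, 0) \<and>
      (\<exists>i<r. \<exists>j<r. i \<noteq> j \<and> dot3 (l i) v = 0 \<and> dot3 (l j) v = 0)}"

inductive_set polyfun :: "(form \<Rightarrow> complex) set" where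
  pf_const: "(\<lambda>F. c) \<in> polyfun"
| pf_coord: "(\<lambda>F. F m) \<in> polyfun"
| pf_add: "p \<in> polyfun \<Longrightarrow> q \<in> polyfun \<Longrightarrow> (\<lambda>F. p F + q F) \<in> polyfun"
| pf_mult: "p \<in> polyfun \<Longrightarrow> q \<in> polyfun \<Longrightarrow> (\<lambda>F. p F * q F) \<in> polyfun"

text \<open>P holds for a general form of degree d: on a nonempty Zariski open subset of S_d.\<close>
definition general :: "nat \<Rightarrow> (form \<Rightarrow> bool) \<Rightarrow> bool" where
  "general d P \<longleftrightarrow> (\<exists>\<Phi>\<in>polyfun. (\<exists>F. homog d F \<and> \<Phi> F \<noteq> 0) \<and>
      (\<forall>F. homog d F \<and> \<Phi> F \<noteq> 0 \<longrightarrow> P F))"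

end

theory Submission
  imports Defs "HOL-Library.FuncSet"
begin

lemma lin_dep:
  fixes c :: "'e \<Rightarrow> 'u \<Rightarrow> complex"
  assumes "finite Eq" "finite U" "card Eq < card U"
  shows "\<exists>q. (\<exists>u\<in>U. q u \<noteq> 0) \<and> (\<forall>\<epsilon>\<in>Eq. (\<Sum>u\<in>U. c \<epsilon> u * q u) = 0)"
  using assms
proof (induction Eq arbitrary: U c rule: finite_induct)
  case empty
  then obtain u where "u \<in> U" by fastforce
  then show ?case by (intro exI[of _ "\<lambda>_. 1"]) auto
next
  case (insert \<epsilon>0 E)
  show ?case
  proof (cases "\<forall>u\<in>U. c \<epsilon>0 u = 0")
    case True
    have "card E < card U" using insert by simp
    from insert.IH[OF insert.prems(1) this] obtain q where
      q: "(\<exists>u\<in>U. q u \<noteq> 0)" "(\<forall>\<epsilon>\<in>E. (\<Sum>u\<in>U. c \<epsilon> u * q u) = 0)" by blast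
    show ?thesis using q True by (intro exI[of _ q]) auto
  next
    case False
    then obtain u0 where u0: "u0 \<in> U" "c \<epsilon>0 u0 \<noteq> 0" by blast
    define U' where "U' = U - {u0}"
    define c' where "c' = (\<lambda>\<epsilon> u. c \<epsilon> u - c \<epsilon> u0 * c \<epsilon>0 u / c \<epsilon>0 u0)"
    have fU': "finite U'" using insert.prems U'_def by simp
    have cU': "card U' = card U - 1" using u0 insert.prems U'_def by simp
    have "card E < card U'" using insert cU' by simp
    from insert.IH[OF fU' this, of c'] obtain q' where
      q': "(\<exists>u\<in>U'. q' u \<noteq> 0)" "(\<forall>\<epsilon>\<in>E. (\<Sum>u\<in>U'. c' \<epsilon> u * q' u) = 0)" by blast
    define S0 where "S0 = (\<Sum>u\<in>U'. c \<epsilon>0 u * q' u)"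
    define q where "q = (\<lambda>u. if u = u0 then - S0 / c \<epsilon>0 u0 else q' u)"
    have split: "(\<Sum>u\<in>U. f u) = f u0 + (\<Sum>u\<in>U'. f u)" for f :: "'u \<Rightarrow> complex"
      using u0 insert.prems U'_def by (simp add: sum.remove)
    have sU': "(\<Sum>u\<in>U'. f u * q u) = (\<Sum>u\<in>U'. f u * q' u)" for f
      by (rule sum.cong) (auto simp: q_def U'_def)
    have e0: "(\<Sum>u\<in>U. c \<epsilon>0 u * q u) = 0"
      unfolding split sU' using u0 by (simp add: q_def S0_def)
    have eE: "(\<Sum>u\<in>U. c \<epsilon> u * q u) = 0" if "\<epsilon> \<in> E" for \<epsilon>
    proof -
      have "(\<Sum>u\<in>U'. c' \<epsilon> u * q' u) = (\<Sum>u\<in>U'. c \<epsilon> u * q' u) - c \<epsilon> u0 / c \<epsilon>0 u0 * S0"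
        unfolding c'_def S0_def by (simp add: algebra_simps sum_subtractf sum_distrib_left sum_divide_distrib)
      then have "(\<Sum>u\<in>U'. c \<epsilon> u * q' u) = c \<epsilon> u0 / c \<epsilon>0 u0 * S0" using q'(2) that by simp
      then show ?thesis unfolding split sU' using u0 by (simp add: q_def)
    qed
    have "\<exists>u\<in>U. q u \<noteq> 0" using q'(1) by (auto simp: q_def U'_def)
    then show ?thesis using e0 eE by (intro exI[of _ q]) auto
  qed
qed


definition Mon :: "'v set \<Rightarrow> nat \<Rightarrow> ('v \<Rightarrow> nat) set" where
  "Mon V E = PiE V (\<lambda>_. {..E})"
definition mmono :: "'v set \<Rightarrow> ('v \<Rightarrow> nat) \<Rightarrow> ('v \<Rightarrow> complex) \<Rightarrow> complex" where
  "mmono V e x = (\<Prod>v\<in>V. x v ^ e v)"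
definition polyb :: "'v set \<Rightarrow> nat \<Rightarrow> (('v \<Rightarrow> complex) \<Rightarrow> complex) \<Rightarrow> bool" where
  "polyb V E f \<longleftrightarrow> (\<exists>c. \<forall>x. f x = (\<Sum>e\<in>Mon V E. c e * mmono V e x))"

lemma finite_Mon: "finite V \<Longrightarrow> finite (Mon V E)"
  unfolding Mon_def by (intro finite_PiE) auto

lemma card_Mon: "finite V \<Longrightarrow> card (Mon V E) = (E+1) ^ card V"
  unfolding Mon_def by (simp add: card_PiE)

lemma sum_single: "finite S \<Longrightarrow> z \<in> S \<Longrightarrow> (\<Sum>e\<in>S. (if e = z then k else 0) * h e) = (k::complex) * h z"
proof -
  assume a: "finite S" "z \<in> S"
  have "(\<Sum>e\<in>S. (if e = z then k else 0) * h e) = (\<Sum>e\<in>S. if e = z then k * h e else 0)"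
    by (rule sum.cong) auto
  then show ?thesis using a by (simp add: sum.delta)
qed

lemma polyb_mono:
  assumes "finite V" "E \<le> E'" "polyb V E f" shows "polyb V E' f"
proof -
  obtain c where c: "\<And>x. f x = (\<Sum>e\<in>Mon V E. c e * mmono V e x)" using assms unfolding polyb_def by blast
  have sub: "Mon V E \<subseteq> Mon V E'" using assms(2) unfolding Mon_def by (auto simp: PiE_def Pi_def)
  define c' where "c' = (\<lambda>e. if e \<in> Mon V E then c e else 0)"
  have "f x = (\<Sum>e\<in>Mon V E'. c' e * mmono V e x)" for x
    unfolding c c'_def
    by (rule sum.mono_neutral_cong_left) (use sub finite_Mon[OF assms(1)] in auto)
  then show ?thesis unfolding polyb_def by (intro exI[of _ c']) simp
qed

lemma polyb_const:
  assumes "finite V" shows "polyb V E (\<lambda>x. k)"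
proof -
  define z where "z = (\<lambda>v\<in>V. 0::nat)"
  have zM: "z \<in> Mon V E" unfolding z_def Mon_def by auto
  have mz: "mmono V z x = 1" for x unfolding mmono_def z_def by (simp)
  have "(\<Sum>e\<in>Mon V E. (if e = z then k else 0) * mmono V e x) = k" for x
    using zM finite_Mon[OF assms] by (simp add: mz sum_single)
  then show ?thesis unfolding polyb_def by (intro exI[of _ "\<lambda>e. if e = z then k else 0"]) simp
qed

lemma polyb_var:
  assumes "finite V" "v0 \<in> V" shows "polyb V 1 (\<lambda>x. x v0)"
proof -
  define z where "z = (\<lambda>v\<in>V. if v = v0 then 1 else 0::nat)"
  have zM: "z \<in> Mon V 1" unfolding z_def Mon_def by auto
  have mz: "mmono V z x = x v0" for x
  proof -
    have "mmono V z x = (\<Prod>v\<in>V. if v = v0 then x v else 1)"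
      unfolding mmono_def z_def by (rule prod.cong) auto
    also have "\<dots> = x v0" using assms by (simp add: prod.delta)
    finally show ?thesis .
  qed
  have "(\<Sum>e\<in>Mon V 1. (if e = z then 1 else 0) * mmono V e x) = x v0" for x
    using zM finite_Mon[OF assms(1)] by (simp add: mz sum_single)
  then show ?thesis unfolding polyb_def by (intro exI[of _ "\<lambda>e. if e = z then 1 else 0"]) simp
qed

lemma polyb_add:
  assumes "polyb V E f" "polyb V E g" shows "polyb V E (\<lambda>x. f x + g x)"
proof -
  obtain c where c: "\<And>x. f x = (\<Sum>e\<in>Mon V E. c e * mmono V e x)" using assms unfolding polyb_def by blast
  obtain d where d: "\<And>x. g x = (\<Sum>e\<in>Mon V E. d e * mmono V e x)" using assms unfolding polyb_def by blast
  have "f x + g x = (\<Sum>e\<in>Mon V E. (c e + d e) * mmono V e x)" for x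
    unfolding c d by (simp add: sum.distrib distrib_right)
  then show ?thesis unfolding polyb_def by (intro exI[of _ "\<lambda>e. c e + d e"]) simp
qed

lemma polyb_mult:
  fixes V :: "'v set"
  assumes V: "finite V" and "polyb V E f" "polyb V E' g" shows "polyb V (E+E') (\<lambda>x. f x * g x)"
proof -
  obtain c where c: "\<And>x. f x = (\<Sum>e\<in>Mon V E. c e * mmono V e x)" using assms unfolding polyb_def by blast
  obtain d where d: "\<And>x. g x = (\<Sum>e\<in>Mon V E'. d e * mmono V e x)" using assms unfolding polyb_def by blast
  define \<phi> where "\<phi> = (\<lambda>p::('v\<Rightarrow>nat)\<times>('v\<Rightarrow>nat). \<lambda>v\<in>V. fst p v + snd p v)"
  define S where "S = Mon V E \<times> Mon V E'"
  have fS: "finite S" unfolding S_def using finite_Mon[OF V] by simp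
  have \<phi>S: "\<phi> ` S \<subseteq> Mon V (E+E')"
    unfolding S_def \<phi>_def Mon_def by (auto simp: PiE_def Pi_def add_mono)
  have m\<phi>: "mmono V (\<phi> p) x = mmono V (fst p) x * mmono V (snd p) x" for p x
  proof -
    have "mmono V (\<phi> p) x = (\<Prod>v\<in>V. x v ^ fst p v * x v ^ snd p v)"
      unfolding mmono_def \<phi>_def by (rule prod.cong) (auto simp: power_add)
    then show ?thesis unfolding mmono_def by (simp add: prod.distrib)
  qed
  define cd where "cd = (\<lambda>m. \<Sum>p\<in>{p. p \<in> S \<and> \<phi> p = m}. c (fst p) * d (snd p))"
  have "f x * g x = (\<Sum>m\<in>Mon V (E+E'). cd m * mmono V m x)" for x
  proof -
    have "f x * g x = (\<Sum>p\<in>S. c (fst p) * d (snd p) * mmono V (\<phi> p) x)"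
      unfolding c d S_def m\<phi> sum_product sum.cartesian_product
      by (rule sum.cong) (auto simp: algebra_simps)
    also have "\<dots> = (\<Sum>m\<in>Mon V (E+E'). \<Sum>p\<in>{p. p \<in> S \<and> \<phi> p = m}. c (fst p) * d (snd p) * mmono V (\<phi> p) x)"
      by (rule sum.group[symmetric, OF fS finite_Mon[OF V] \<phi>S])
    also have "\<dots> = (\<Sum>m\<in>Mon V (E+E'). cd m * mmono V m x)"
      unfolding cd_def sum_distrib_right by (intro sum.cong refl) auto
    finally show ?thesis .
  qed
  then show ?thesis unfolding polyb_def by (intro exI[of _ cd]) simp
qed

lemma polyb_sum:
  assumes "finite V" "finite S" "\<forall>i\<in>S. polyb V E (f i)" shows "polyb V E (\<lambda>x. \<Sum>i\<in>S. f i x)"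
  using assms(2,3)
proof (induction S rule: finite_induct)
  case empty then show ?case using polyb_const[OF assms(1)] by simp
next
  case (insert a S) then show ?case using polyb_add[of V E "f a" "\<lambda>x. \<Sum>i\<in>S. f i x"] by simp
qed

lemma polyb_prod:
  assumes "finite V" "finite S" "\<forall>i\<in>S. polyb V (E i) (f i)" shows "polyb V (\<Sum>i\<in>S. E i) (\<lambda>x. \<Prod>i\<in>S. f i x)"
  using assms(2,3)
proof (induction S rule: finite_induct)
  case empty then show ?case using polyb_const[OF assms(1)] by simp
next
  case (insert a S) then show ?case using polyb_mult[OF assms(1), of "E a" "f a" "\<Sum>i\<in>S. E i" "\<lambda>x. \<Prod>i\<in>S. f i x"] by simp
qed

lemma polyb_power:
  assumes "finite V" "polyb V E f" shows "polyb V (n*E) (\<lambda>x. f x ^ n)"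
proof (induction n)
  case 0 then show ?case using polyb_const[OF assms(1)] by simp
next
  case (Suc n) then show ?case using polyb_mult[OF assms(1) assms(2) Suc] by (simp add: add.commute)
qed

lemma poly_ident:
  fixes q :: "('j \<Rightarrow> nat) \<Rightarrow> complex"
  assumes "finite J" "\<forall>x. (\<Sum>a\<in>PiE J (\<lambda>_. {..<t}). q a * (\<Prod>j\<in>J. x j ^ a j)) = 0"
  shows "\<forall>a\<in>PiE J (\<lambda>_. {..<t}). q a = 0"
  using assms
proof (induction J arbitrary: q rule: finite_induct)
  case empty
  then show ?case by simp
next
  case (insert j J)
  show ?case
  proof (cases "t = 0")
    case True then show ?thesis by (auto simp: PiE_iff)
  next
    case False
    have tt: "{..<t} = {..t-1}" using False by auto
    have inj: "inj_on (\<lambda>(y, g). g(j := y)) ({..<t} \<times> PiE J (\<lambda>_. {..<t}))"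
    proof (intro inj_onI, clarsimp)
      fix y1 g1 y2 g2 assume h: "g1(j := y1) = g2(j := y2)" "g1 \<in> PiE J (\<lambda>_. {..<t})" "g2 \<in> PiE J (\<lambda>_. {..<t})"
      have "y1 = y2" using h(1) by (metis fun_upd_same)
      moreover have "g1 x = g2 x" for x
      proof (cases "x = j")
        case True then show ?thesis using h(2,3) insert.hyps(2) by (auto simp: PiE_def extensional_def)
      next
        case False then show ?thesis using h(1) by (metis fun_upd_other)
      qed
      ultimately show "y1 = y2 \<and> g1 = g2" by auto
    qed
    have key: "(\<Sum>b\<in>PiE J (\<lambda>_. {..<t}). q (b(j := s)) * (\<Prod>i\<in>J. x i ^ b i)) = 0" if "s < t" for s x
    proof -
      define C where "C = (\<lambda>s. \<Sum>b\<in>PiE J (\<lambda>_. {..<t}). q (b(j := s)) * (\<Prod>i\<in>J. x i ^ b i))"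
      have "(\<Sum>s\<le>t-1. C s * z ^ s) = 0" for z
      proof -
        have "0 = (\<Sum>a\<in>PiE (insert j J) (\<lambda>_. {..<t}). q a * (\<Prod>i\<in>insert j J. (x(j:=z)) i ^ a i))"
          using insert.prems by simp
        also have "\<dots> = (\<Sum>p\<in>{..<t} \<times> PiE J (\<lambda>_. {..<t}). q ((snd p)(j := fst p)) * (\<Prod>i\<in>insert j J. (x(j:=z)) i ^ ((snd p)(j := fst p)) i))"
          unfolding PiE_insert_eq by (subst sum.reindex[OF inj]) (simp add: case_prod_beta)
        also have "\<dots> = (\<Sum>p\<in>{..<t} \<times> PiE J (\<lambda>_. {..<t}). q ((snd p)(j := fst p)) * (z ^ fst p * (\<Prod>i\<in>J. x i ^ snd p i)))"
        proof (intro sum.cong refl)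
          fix p assume "p \<in> {..<t} \<times> PiE J (\<lambda>_. {..<t})"
          have "(\<Prod>i\<in>J. (x(j:=z)) i ^ ((snd p)(j := fst p)) i) = (\<Prod>i\<in>J. x i ^ snd p i)"
            using insert.hyps(2) by (intro prod.cong) auto
          then show "q ((snd p)(j := fst p)) * (\<Prod>i\<in>insert j J. (x(j := z)) i ^ ((snd p)(j := fst p)) i) =
             q ((snd p)(j := fst p)) * (z ^ fst p * (\<Prod>i\<in>J. x i ^ snd p i))"
            using insert.hyps by simp
        qed
        also have "\<dots> = (\<Sum>s<t. \<Sum>b\<in>PiE J (\<lambda>_. {..<t}). q (b(j := s)) * (z ^ s * (\<Prod>i\<in>J. x i ^ b i)))"
          by (simp add: sum.cartesian_product case_prod_beta)
        also have "\<dots> = (\<Sum>s\<le>t-1. C s * z ^ s)"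
          unfolding C_def tt[symmetric] sum_distrib_right by (intro sum.cong refl) (simp add: algebra_simps)
        finally show ?thesis by simp
      qed
      then have "\<forall>s\<le>t-1. C s = 0" using polyfun_eq_0[of C "t-1"] by blast
      then show ?thesis using that unfolding C_def by simp
    qed
    have IH: "\<forall>b\<in>PiE J (\<lambda>_. {..<t}). q (b(j := s)) = 0" if "s < t" for s
      using insert.IH[of "\<lambda>b. q (b(j := s))"] key[OF that] by blast
    show ?thesis
    proof
      fix a assume a: "a \<in> PiE (insert j J) (\<lambda>_. {..<t})"
      then have "a(j := undefined) \<in> PiE J (\<lambda>_. {..<t})" "a j < t"
        using insert.hyps(2) by (auto simp: PiE_def extensional_def Pi_def)
      then have "q ((a(j := undefined))(j := a j)) = 0" using IH by blast
      then show "q a = 0" by simp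
    qed
  qed
qed

lemma polyfun_sum: "finite S \<Longrightarrow> (\<forall>i\<in>S. f i \<in> polyfun) \<Longrightarrow> (\<lambda>F. \<Sum>i\<in>S. f i F) \<in> polyfun"
proof (induction S rule: finite_induct)
  case empty then show ?case using pf_const[of 0] by simp
next
  case (insert a S) then show ?case using pf_add[of "f a" "\<lambda>F. \<Sum>i\<in>S. f i F"] by simp
qed

lemma polyfun_prod: "finite S \<Longrightarrow> (\<forall>i\<in>S. f i \<in> polyfun) \<Longrightarrow> (\<lambda>F. \<Prod>i\<in>S. f i F) \<in> polyfun"
proof (induction S rule: finite_induct)
  case empty then show ?case using pf_const[of 1] by simp
next
  case (insert a S) then show ?case using pf_mult[of "f a" "\<lambda>F. \<Prod>i\<in>S. f i F"] by simp
qed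

lemma polyfun_power: "f \<in> polyfun \<Longrightarrow> (\<lambda>F. f F ^ n) \<in> polyfun"
proof (induction n)
  case 0 then show ?case using pf_const[of 1] by simp
next
  case (Suc n) then show ?case using pf_mult[of f "\<lambda>F. f F ^ n"] by simp
qed


fun cmp :: "nat \<Rightarrow> pt \<Rightarrow> complex" where
  "cmp 0 (x,y,z) = x" | "cmp (Suc 0) (x,y,z) = y" | "cmp (Suc (Suc _)) (x,y,z) = z"
fun mcmp :: "nat \<Rightarrow> mon \<Rightarrow> nat" where
  "mcmp 0 (x,y,z) = x" | "mcmp (Suc 0) (x,y,z) = y" | "mcmp (Suc (Suc _)) (x,y,z) = z"
fun inc :: "nat \<Rightarrow> mon \<Rightarrow> mon" where
  "inc 0 (x,y,z) = (Suc x,y,z)" | "inc (Suc 0) (x,y,z) = (x,Suc y,z)" | "inc (Suc (Suc _)) (x,y,z) = (x,y,Suc z)"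
fun dec :: "nat \<Rightarrow> mon \<Rightarrow> mon" where
  "dec 0 (x,y,z) = (x-1,y,z)" | "dec (Suc 0) (x,y,z) = (x,y-1,z)" | "dec (Suc (Suc _)) (x,y,z) = (x,y,z-1)"

definition shift :: "nat \<Rightarrow> form \<Rightarrow> form" where
  "shift k g m = (if 0 < mcmp k m then g (dec k m) else 0)"

lemma nat3: "k = 0 \<or> k = Suc 0 \<or> (\<exists>j. k = Suc (Suc j))"
  by (metis not0_implies_Suc)

lemma inc_facts:
  "dec k (inc k m) = m" "0 < mcmp k (inc k m)" "mdeg (inc k m) = Suc (mdeg m)"
  "mon_eval (inc k m) v = cmp k v * mon_eval m v"
  "0 < mcmp k m \<Longrightarrow> inc k (dec k m) = m"
  "0 < mcmp k m \<Longrightarrow> Suc (mdeg (dec k m)) = mdeg m"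
  using nat3[of k] by (cases m; cases v; auto simp: mdeg_def)+

lemma inj_inc: "inj (inc k)"
  by (metis inc_facts(1) injI)

lemma finite_monos: "finite (monos_of e)"
proof -
  have "monos_of e \<subseteq> {..e} \<times> {..e} \<times> {..e}" by (auto simp: monos_of_def mdeg_def)
  then show ?thesis by (rule finite_subset) auto
qed

lemma homogD: "homog e g \<Longrightarrow> mdeg m \<noteq> e \<Longrightarrow> g m = 0"
  unfolding homog_def by blast

lemma homog_shift: "homog e g \<Longrightarrow> homog (Suc e) (shift k g)"
  unfolding homog_def shift_def by (metis inc_facts(6))

lemma heval_shift:
  assumes "homog e g"
  shows "heval (Suc e) (shift k g) v = cmp k v * heval e g v"
proof -
  have sub: "inc k ` monos_of e \<subseteq> monos_of (Suc e)" by (auto simp: monos_of_def inc_facts)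
  have "heval (Suc e) (shift k g) v = (\<Sum>m\<in>inc k ` monos_of e. shift k g m * mon_eval m v)"
    unfolding heval_def
  proof (rule sum.mono_neutral_right[OF finite_monos sub])
    show "\<forall>m\<in>monos_of (Suc e) - inc k ` monos_of e. shift k g m * mon_eval m v = 0"
    proof
      fix m assume m: "m \<in> monos_of (Suc e) - inc k ` monos_of e"
      show "shift k g m * mon_eval m v = 0"
      proof (cases "0 < mcmp k m")
        case True
        then have "m = inc k (dec k m)" "dec k m \<in> monos_of e"
          using m inc_facts(5,6)[of k m] by (auto simp: monos_of_def)
        then show ?thesis using m by blast
      qed (simp add: shift_def)
    qed
  qed
  also have "\<dots> = (\<Sum>m\<in>monos_of e. shift k g (inc k m) * mon_eval (inc k m) v)"
    by (rule sum.reindex[OF inj_on_subset[OF inj_inc subset_UNIV], unfolded comp_def])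
  also have "\<dots> = cmp k v * heval e g v"
    unfolding heval_def sum_distrib_left by (rule sum.cong) (auto simp: shift_def inc_facts)
  finally show ?thesis .
qed

lemma heval_add: "heval e (\<lambda>m. f m + h m) v = heval e f v + heval e h v"
  unfolding heval_def by (simp add: distrib_right sum.distrib)
lemma heval_scale: "heval e (\<lambda>m. a * f m) v = a * heval e f v"
  unfolding heval_def by (simp add: sum_distrib_left mult.assoc)
lemma heval_sum: "heval e (\<lambda>m. \<Sum>u\<in>U. f u m) v = (\<Sum>u\<in>U. heval e (f u) v)"
  unfolding heval_def by (simp add: sum_distrib_right sum.swap[of _ U])
lemma homog_add: "homog e f \<Longrightarrow> homog e h \<Longrightarrow> homog e (\<lambda>m. f m + h m)"
  unfolding homog_def by simp
lemma homog_scale: "homog e f \<Longrightarrow> homog e (\<lambda>m. a * f m)"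
  unfolding homog_def by simp
lemma homog_sum: "(\<forall>u\<in>U. homog e (f u)) \<Longrightarrow> homog e (\<lambda>m. \<Sum>u\<in>U. f u m)"
  unfolding homog_def by simp

definition lin_mult :: "pt \<Rightarrow> form \<Rightarrow> form" where
  "lin_mult w g = (\<lambda>m. cmp 0 w * shift 0 g m + (cmp 1 w * shift 1 g m + cmp 2 w * shift 2 g m))"

lemma dot3_cmp: "dot3 w v = cmp 0 w * cmp 0 v + (cmp 1 w * cmp 1 v + cmp 2 w * cmp 2 v)"
  by (cases w; cases v) (simp add: numeral_2_eq_2)

lemma lin_mult:
  assumes "homog e g"
  shows "homog (Suc e) (lin_mult w g)" "heval (Suc e) (lin_mult w g) v = dot3 w v * heval e g v"
proof -
  show "homog (Suc e) (lin_mult w g)" unfolding lin_mult_def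
    by (intro homog_add homog_scale homog_shift assms)
  show "heval (Suc e) (lin_mult w g) v = dot3 w v * heval e g v"
    unfolding lin_mult_def heval_add heval_scale heval_shift[OF assms] dot3_cmp
    by (simp add: algebra_simps)
qed

lemma prod_forms:
  "\<exists>g. homog (length ws) g \<and> (\<forall>v. heval (length ws) g v = (\<Prod>w\<leftarrow>ws. dot3 w v))"
proof (induction ws)
  case Nil
  define g0 :: form where "g0 = (\<lambda>m. if m = (0,0,0) then 1 else 0)"
  have m0: "monos_of 0 = {(0,0,0)}" by (auto simp: monos_of_def mdeg_def)
  have "homog 0 g0" by (auto simp: homog_def g0_def mdeg_def)
  moreover have "heval 0 g0 v = 1" for v by (cases v) (simp add: heval_def m0 g0_def)
  ultimately show ?case by auto
next
  case (Cons w ws)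
  then obtain g where "homog (length ws) g" "\<forall>v. heval (length ws) g v = (\<Prod>w\<leftarrow>ws. dot3 w v)" by blast
  then show ?case using lin_mult[of "length ws" g w] by (intro exI[of _ "lin_mult w g"]) auto
qed

lemma mon_eval_smul: "mon_eval m (smul3 t v) = t ^ mdeg m * mon_eval m v"
  by (cases m; cases v) (simp add: mdeg_def power_add power_mult_distrib)

lemma heval_smul: "heval e g (smul3 t v) = t ^ e * heval e g v"
  unfolding heval_def sum_distrib_left
  by (rule sum.cong) (auto simp: mon_eval_smul monos_of_def)

lemma card_monos: "2 * card (monos_of e) = (e+1)*(e+2)"
proof (induction e)
  case 0
  have m0: "monos_of 0 = {(0,0,0)}" by (auto simp: monos_of_def mdeg_def)
  show ?case by (simp add: m0)
next
  case (Suc e)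
  define B where "B = (\<lambda>b. (0::nat, b, Suc e - b)) ` {..Suc e}"
  have eq: "monos_of (Suc e) = inc 0 ` monos_of e \<union> B"
  proof
    show "monos_of (Suc e) \<subseteq> inc 0 ` monos_of e \<union> B"
    proof
      fix m assume m: "m \<in> monos_of (Suc e)"
      obtain a b c where abc: "m = (a,b,c)" by (cases m)
      show "m \<in> inc 0 ` monos_of e \<union> B"
      proof (cases a)
        case 0 then show ?thesis using m abc by (auto simp: B_def monos_of_def mdeg_def image_iff)
      next
        case (Suc a')
        then have "m = inc 0 (a',b,c)" "(a',b,c) \<in> monos_of e" using m abc by (auto simp: monos_of_def mdeg_def)
        then show ?thesis by blast
      qed
    qed
    show "inc 0 ` monos_of e \<union> B \<subseteq> monos_of (Suc e)"
      by (auto simp: B_def monos_of_def inc_facts) (auto simp: mdeg_def)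
  qed
  have disj: "inc 0 ` monos_of e \<inter> B = {}"
    by (auto simp: B_def)
  have cB: "card B = e + 2" unfolding B_def by (subst card_image) (auto intro: inj_onI)
  have "card (monos_of (Suc e)) = card (monos_of e) + (e + 2)"
    unfolding eq by (subst card_Un_disjoint) (auto simp: finite_monos disj B_def card_image[OF inj_on_subset[OF inj_inc subset_UNIV]] cB[unfolded B_def])
  then show ?case using Suc by simp
qed

definition Pairs :: "nat \<Rightarrow> (nat \<times> nat) set" where
  "Pairs r = {(i,j). i < j \<and> j < r}"

lemma finite_Pairs: "finite (Pairs r)"
proof -
  have "Pairs r \<subseteq> {..<r} \<times> {..<r}" by (auto simp: Pairs_def)
  then show ?thesis by (rule finite_subset) auto
qed

lemma card_Pairs: "2 * card (Pairs r) = r * (r - 1)"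
proof (induction r)
  case 0 then show ?case by (simp add: Pairs_def)
next
  case (Suc r)
  have eq: "Pairs (Suc r) = Pairs r \<union> (\<lambda>i. (i, r)) ` {..<r}" by (auto simp: Pairs_def)
  have "card (Pairs (Suc r)) = card (Pairs r) + r"
    unfolding eq using finite_Pairs[of r] by (subst card_Un_disjoint) (auto simp: Pairs_def card_image inj_on_def)
  then show ?case using Suc by (cases r) (auto simp: algebra_simps)
qed


fun cross :: "pt \<Rightarrow> pt \<Rightarrow> pt" where
  "cross (a0,a1,a2) (b0,b1,b2) = (a1*b2 - a2*b1, a2*b0 - a0*b2, a0*b1 - a1*b0)"

lemma dot_cross1: "dot3 a (cross a b) = 0"
  by (cases a; cases b) (simp add: algebra_simps)
lemma dot_cross2: "dot3 b (cross a b) = 0"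
  by (cases a; cases b) (simp add: algebra_simps)
lemma cross_swap: "cross b a = smul3 (-1) (cross a b)"
  by (cases a; cases b) simp
lemma cross_smul: "cross (smul3 s a) (smul3 t b) = smul3 (s*t) (cross a b)"
  by (cases a; cases b) (simp add: algebra_simps)

lemma indep2_cross:
  assumes "indep2 a b" shows "cross a b \<noteq> (0,0,0)"
proof
  assume c: "cross a b = (0,0,0)"
  obtain a0 a1 a2 where a: "a = (a0,a1,a2)" by (cases a)
  obtain b0 b1 b2 where b: "b = (b0,b1,b2)" by (cases b)
  have e: "a1*b2 - a2*b1 = 0" "a2*b0 - a0*b2 = 0" "a0*b1 - a1*b0 = 0" using c by (simp_all add: a b)
  have I: "\<And>x y. add3 (smul3 x a) (smul3 y b) = (0,0,0) \<Longrightarrow> x = 0 \<and> y = 0"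
    using assms unfolding indep2_def by blast
  have L: "add3 (smul3 x a) (smul3 y b) = (x*a0 + y*b0, x*a1 + y*b1, x*a2 + y*b2)" for x y
    by (simp add: a b)
  have k0: "b0*a0 + (-a0)*b0 = 0" "b0*a1 + (-a0)*b1 = -(a0*b1 - a1*b0)" "b0*a2 + (-a0)*b2 = a2*b0 - a0*b2"
    by (simp_all add: algebra_simps)
  have k1: "b1*a0 + (-a1)*b0 = a0*b1 - a1*b0" "b1*a1 + (-a1)*b1 = 0" "b1*a2 + (-a1)*b2 = -(a1*b2 - a2*b1)"
    by (simp_all add: algebra_simps)
  have k2: "b2*a0 + (-a2)*b0 = -(a2*b0 - a0*b2)" "b2*a1 + (-a2)*b1 = a1*b2 - a2*b1" "b2*a2 + (-a2)*b2 = 0"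
    by (simp_all add: algebra_simps)
  have z0: "add3 (smul3 b0 a) (smul3 (-a0) b) = (0,0,0)" unfolding L k0 e by simp
  have z1: "add3 (smul3 b1 a) (smul3 (-a1) b) = (0,0,0)" unfolding L k1 e by simp
  have z2: "add3 (smul3 b2 a) (smul3 (-a2) b) = (0,0,0)" unfolding L k2 e by simp
  have "a0 = 0" "a1 = 0" "a2 = 0" using I[OF z0] I[OF z1] I[OF z2] by simp_all
  then have "add3 (smul3 1 a) (smul3 0 b) = (0,0,0)" by (simp add: a b)
  then show False using I by fastforce
qed

lemma indep3_indep2: "indep3 a b c \<Longrightarrow> indep2 a b"
  unfolding indep3_def indep2_def
proof (intro allI impI)
  fix x y assume I: "\<forall>x y z. add3 (add3 (smul3 x a) (smul3 y b)) (smul3 z c) = (0, 0, 0) \<longrightarrow> x = 0 \<and> y = 0 \<and> z = 0"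
    and h: "add3 (smul3 x a) (smul3 y b) = (0, 0, 0)"
  have "add3 (add3 (smul3 x a) (smul3 y b)) (smul3 0 c) = (0, 0, 0)"
    using h by (cases c) simp
  then show "x = 0 \<and> y = 0" using I by blast
qed

lemma indep3_det:
  assumes "indep3 a b c" shows "dot3 c (cross a b) \<noteq> 0"
proof
  assume d: "dot3 c (cross a b) = 0"
  have nz: "cross a b \<noteq> (0,0,0)" using indep2_cross[OF indep3_indep2[OF assms]] .
  obtain a0 a1 a2 where a: "a = (a0,a1,a2)" by (cases a)
  obtain b0 b1 b2 where b: "b = (b0,b1,b2)" by (cases b)
  obtain c0 c1 c2 where c: "c = (c0,c1,c2)" by (cases c)
  have I: "\<And>x y z. add3 (add3 (smul3 x a) (smul3 y b)) (smul3 z c) = (0,0,0) \<Longrightarrow> x = 0 \<and> y = 0 \<and> z = 0"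
    using assms unfolding indep3_def by blast
  have dd: "c0*(a1*b2 - a2*b1) + c1*(a2*b0 - a0*b2) + c2*(a0*b1 - a1*b0) = 0"
    using d by (simp add: a b c)
  let ?x0 = "b1*c2 - b2*c1" and ?y0 = "c1*a2 - c2*a1" and ?z0 = "a1*b2 - a2*b1"
  let ?x1 = "b2*c0 - b0*c2" and ?y1 = "c2*a0 - c0*a2" and ?z1 = "a2*b0 - a0*b2"
  let ?x2 = "b0*c1 - b1*c0" and ?y2 = "c0*a1 - c1*a0" and ?z2 = "a0*b1 - a1*b0"
  have E: "add3 (add3 (smul3 ?x0 a) (smul3 ?y0 b)) (smul3 ?z0 c) = (0,0,0)"
          "add3 (add3 (smul3 ?x1 a) (smul3 ?y1 b)) (smul3 ?z1 c) = (0,0,0)"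
          "add3 (add3 (smul3 ?x2 a) (smul3 ?y2 b)) (smul3 ?z2 c) = (0,0,0)"
    unfolding a b c using dd by (simp only: add3.simps smul3.simps prod.inject; intro conjI; simp add: algebra_simps)+
  have "?z0 \<noteq> 0 \<or> ?z1 \<noteq> 0 \<or> ?z2 \<noteq> 0" using nz by (simp add: a b)
  then show False using I[OF E(1)] I[OF E(2)] I[OF E(3)] by blast
qed

lemma cone:
  assumes "dot3 a v = 0" "dot3 b v = 0" "cross a b \<noteq> (0,0,0)"
  shows "\<exists>t. v = smul3 t (cross a b)"
proof -
  obtain a0 a1 a2 where a: "a = (a0,a1,a2)" by (cases a)
  obtain b0 b1 b2 where b: "b = (b0,b1,b2)" by (cases b)
  obtain v0 v1 v2 where v: "v = (v0,v1,v2)" by (cases v)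
  have h: "a0*v0 + a1*v1 + a2*v2 = 0" "b0*v0 + b1*v1 + b2*v2 = 0" using assms by (simp_all add: a b v)
  define c0 where "c0 = a1*b2 - a2*b1"
  define c1 where "c1 = a2*b0 - a0*b2"
  define c2 where "c2 = a0*b1 - a1*b0"
  have cr: "cross a b = (c0,c1,c2)" by (simp add: a b c0_def c1_def c2_def)
  have e1: "c1*v2 = c2*v1"
  proof -
    have "c1*v2 - c2*v1 = b0*(a0*v0 + a1*v1 + a2*v2) - a0*(b0*v0 + b1*v1 + b2*v2)"
      unfolding c1_def c2_def by (simp add: algebra_simps)
    then show ?thesis using h by simp
  qed
  have e2: "c2*v0 = c0*v2"
  proof -
    have "c2*v0 - c0*v2 = b1*(a0*v0 + a1*v1 + a2*v2) - a1*(b0*v0 + b1*v1 + b2*v2)"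
      unfolding c0_def c2_def by (simp add: algebra_simps)
    then show ?thesis using h by simp
  qed
  have e3: "c0*v1 = c1*v0"
  proof -
    have "c0*v1 - c1*v0 = b2*(a0*v0 + a1*v1 + a2*v2) - a2*(b0*v0 + b1*v1 + b2*v2)"
      unfolding c0_def c1_def by (simp add: algebra_simps)
    then show ?thesis using h by simp
  qed
  have nz: "c0 \<noteq> 0 \<or> c1 \<noteq> 0 \<or> c2 \<noteq> 0" using assms(3) cr by auto
  have S: "v = smul3 t (cross a b)" if "v0 = t*c0" "v1 = t*c1" "v2 = t*c2" for t
    unfolding cr v using that by simp
  show ?thesis
  proof (cases "c0 \<noteq> 0")
    case True
    have "v0 = v0/c0*c0" "v1 = v0/c0*c1" "v2 = v0/c0*c2"
      using True e2[symmetric] e3 by (simp_all add: divide_simps) (simp_all only: mult.commute)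
    then show ?thesis using S by blast
  next
    case f0: False
    show ?thesis
    proof (cases "c1 \<noteq> 0")
      case True
      have "v0 = v1/c1*c0" "v1 = v1/c1*c1" "v2 = v1/c1*c2"
        using True e1 e3[symmetric] by (simp_all add: divide_simps) (simp_all only: mult.commute)
      then show ?thesis using S by blast
    next
      case False
      then have c2: "c2 \<noteq> 0" using nz f0 by blast
      have "v0 = v2/c2*c0" "v1 = v2/c2*c1" "v2 = v2/c2*c2"
        using c2 e1[symmetric] e2 by (simp_all add: divide_simps) (simp_all only: mult.commute)
      then show ?thesis using S by blast
    qed
  qed
qed

lemma prod_set_forms:
  assumes "finite K"
  shows "\<exists>g. homog (card K + s) g \<and> (\<forall>v. heval (card K + s) g v = (\<Prod>k\<in>K. dot3 (f k) v) * dot3 w v ^ s)"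
proof (induction s)
  case 0
  show ?case using assms
  proof (induction K rule: finite_induct)
    case empty
    define g0 :: form where "g0 = (\<lambda>m. if m = (0,0,0) then 1 else 0)"
    have m0: "monos_of 0 = {(0,0,0)}" by (auto simp: monos_of_def mdeg_def)
    have "homog 0 g0" by (auto simp: homog_def g0_def mdeg_def)
    moreover have "heval 0 g0 v = 1" for v by (cases v) (simp add: heval_def m0 g0_def)
    ultimately show ?case by auto
  next
    case (insert k K)
    then obtain g where "homog (card K) g" "\<forall>v. heval (card K) g v = (\<Prod>k\<in>K. dot3 (f k) v)" by auto
    then show ?case using lin_mult[of "card K" g "f k"] insert by (intro exI[of _ "lin_mult (f k) g"]) auto
  qed
next
  case (Suc s)
  then obtain g where "homog (card K + s) g" "\<forall>v. heval (card K + s) g v = (\<Prod>k\<in>K. dot3 (f k) v) * dot3 w v ^ s" by auto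
  then show ?case using lin_mult[of "card K + s" g w] by (intro exI[of _ "lin_mult w g"]) (auto simp: algebra_simps)
qed

lemma separator:
  assumes sl: "star_lines r l" and p: "(i,j) \<in> Pairs r" and e: "r - 2 \<le> e"
  shows "\<exists>g. homog e g \<and> (\<forall>v. heval e g v = (\<Prod>k\<in>{..<r} - {i,j}. dot3 (l k) v) * dot3 w v ^ (e - (r-2)))"
proof -
  have c: "card ({..<r} - {i,j}) = r - 2" using p by (auto simp: Pairs_def card_Diff_subset)
  have "card ({..<r} - {i,j}) + (e - (r-2)) = e" using c e by simp
  then show ?thesis using prod_set_forms[of "{..<r} - {i,j}" "e - (r-2)" l w] by simp
qed

lemma sep_at_self:
  assumes sl: "star_lines r l" and p: "(i,j) \<in> Pairs r"
  shows "(\<Prod>k\<in>{..<r} - {i,j}. dot3 (l k) (cross (l i) (l j))) \<noteq> 0"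
proof -
  have "dot3 (l k) (cross (l i) (l j)) \<noteq> 0" if "k \<in> {..<r} - {i,j}" for k
    using sl p that unfolding star_lines_def Pairs_def by (intro indep3_det) auto
  then show ?thesis by simp
qed

lemma sep_at_other:
  assumes p: "(i,j) \<in> Pairs r" and p': "(i',j') \<in> Pairs r" and ne: "(i',j') \<noteq> (i,j)"
  shows "(\<Prod>k\<in>{..<r} - {i,j}. dot3 (l k) (cross (l i') (l j'))) = 0"
proof -
  have "\<exists>k. k \<in> {..<r} - {i,j} \<and> (k = i' \<or> k = j')"
  proof (cases "i' \<in> {i,j}")
    case True
    then have "j' \<notin> {i,j}" using p p' ne unfolding Pairs_def by auto
    then show ?thesis using p' unfolding Pairs_def by auto
  next
    case False
    then show ?thesis using p' unfolding Pairs_def by (intro exI[of _ i']) auto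
  qed
  then obtain k where k: "k \<in> {..<r} - {i,j}" "k = i' \<or> k = j'" by blast
  then have "dot3 (l k) (cross (l i') (l j')) = 0" using dot_cross1 dot_cross2 by metis
  then show ?thesis using k by (intro prod_zero) auto
qed


definition vl :: "nat \<Rightarrow> pt" where "vl i = (1, of_nat i, of_nat i ^ 2)"

lemma vand3:
  fixes x y z a b c :: complex
  assumes "x \<noteq> y" "y \<noteq> z" "x \<noteq> z"
    "a + b + c = 0" "a*x + b*y + c*z = 0" "a*x^2 + b*y^2 + c*z^2 = 0"
  shows "a = 0 \<and> b = 0 \<and> c = 0"
proof -
  have "c*((z-x)*(z-y)) = (a*x^2 + b*y^2 + c*z^2) - (x+y)*(a*x + b*y + c*z) + x*y*(a + b + c)"
    by (simp add: algebra_simps power2_eq_square)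
  then have "c*((z-x)*(z-y)) = 0" using assms by simp
  then have c: "c = 0" using assms by simp
  have "b*((y-x)*(y-z)) = (a*x^2 + b*y^2 + c*z^2) - (x+z)*(a*x + b*y + c*z) + x*z*(a + b + c)"
    by (simp add: algebra_simps power2_eq_square)
  then have "b*((y-x)*(y-z)) = 0" using assms by simp
  then have b: "b = 0" using assms by simp
  show ?thesis using b c assms by simp
qed

lemma star_vl: "star_lines r vl"
  unfolding star_lines_def
proof (intro conjI allI impI)
  fix i j k assume "i < r" "j < r" "k < r" "i \<noteq> j \<and> j \<noteq> k \<and> i \<noteq> k"
  then have d: "(of_nat i::complex) \<noteq> of_nat j" "(of_nat j::complex) \<noteq> of_nat k" "(of_nat i::complex) \<noteq> of_nat k" by auto
  show "indep3 (vl i) (vl j) (vl k)"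
    unfolding indep3_def vl_def
  proof (intro allI impI)
    fix a b c
    assume "add3 (add3 (smul3 a (1, of_nat i, of_nat i ^ 2)) (smul3 b (1, of_nat j, of_nat j ^ 2))) (smul3 c (1, of_nat k, of_nat k ^ 2)) = (0, 0, 0)"
    then have "a + b + c = 0" "a*of_nat i + b*of_nat j + c*of_nat k = 0" "a*(of_nat i)^2 + b*(of_nat j)^2 + c*(of_nat k)^2 = (0::complex)"
      by simp_all
    then show "a = 0 \<and> b = 0 \<and> c = 0" using vand3[OF d] by blast
  qed
next
  fix i j assume "i < r" "j < r" "i \<noteq> j"
  then have d: "(of_nat i::complex) \<noteq> of_nat j" by auto
  show "indep2 (vl i) (vl j)"
    unfolding indep2_def vl_def
  proof (intro allI impI)
    fix a b
    assume "add3 (smul3 a (1, of_nat i, of_nat i ^ 2)) (smul3 b (1, of_nat j, of_nat j ^ 2)) = (0, 0, 0)"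
    then have e: "a + b = 0" "a*of_nat i + b*of_nat j = (0::complex)" by simp_all
    have "b * (of_nat j - of_nat i) = (a*of_nat i + b*of_nat j) - of_nat i * (a + b)" by (simp add: algebra_simps)
    then have "b * (of_nat j - of_nat i) = 0" using e by simp
    then have "b = 0" using d by simp
    then show "a = 0 \<and> b = 0" using e by simp
  qed
qed

lemma cross_in_star:
  assumes "star_lines r l" "(i,j) \<in> Pairs r"
  shows "cross (l i) (l j) \<in> star_points r l"
proof -
  have ij: "i < r" "j < r" "i \<noteq> j" using assms(2) by (auto simp: Pairs_def)
  have "indep2 (l i) (l j)" using assms(1) ij unfolding star_lines_def by blast
  then have nz: "cross (l i) (l j) \<noteq> (0,0,0)" by (rule indep2_cross)
  have "dot3 (l i) (cross (l i) (l j)) = 0" "dot3 (l j) (cross (l i) (l j)) = 0"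
    by (rule dot_cross1, rule dot_cross2)
  then show ?thesis unfolding star_points_def using nz ij by blast
qed

lemma A0:
  assumes sl: "star_lines r l" and r2: "2 \<le> r" and hh: "homog (r-2) h"
    and van: "\<forall>p\<in>Pairs r. heval (r-2) h (cross (l (fst p)) (l (snd p))) = 0"
  shows "h m = 0"
proof -
  let ?P = "\<lambda>p. cross (l (fst p)) (l (snd p))"
  have "\<forall>p\<in>Pairs r. \<exists>g. homog (r-2) g \<and> (\<forall>v. heval (r-2) g v = (\<Prod>k\<in>{..<r} - {fst p, snd p}. dot3 (l k) v))"
  proof
    fix p assume "p \<in> Pairs r"
    then have "(fst p, snd p) \<in> Pairs r" by simp
    from separator[OF sl this order.refl, of "(0,0,0)"]
    show "\<exists>g. homog (r-2) g \<and> (\<forall>v. heval (r-2) g v = (\<Prod>k\<in>{..<r} - {fst p, snd p}. dot3 (l k) v))"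
      by simp
  qed
  then obtain sep where sep: "\<forall>p\<in>Pairs r. homog (r-2) (sep p) \<and> (\<forall>v. heval (r-2) (sep p) v = (\<Prod>k\<in>{..<r} - {fst p, snd p}. dot3 (l k) v))"
    by (metis bchoice)
  have sepH: "homog (r-2) (sep p)" if "p \<in> Pairs r" for p using sep that by blast
  have sepV: "heval (r-2) (sep p) x = (\<Prod>k\<in>{..<r} - {fst p, snd p}. dot3 (l k) x)" if "p \<in> Pairs r" for p x
    using sep that by blast
  define U where "U = insert (r,r) (Pairs r)"
  define vec where "vec = (\<lambda>u. if u = (r,r) then h else sep u)"
  have rP: "(r,r) \<notin> Pairs r" by (simp add: Pairs_def)
  have fU: "finite U" by (simp add: U_def finite_Pairs)
  have cU: "card U = card (Pairs r) + 1" using rP by (simp add: U_def finite_Pairs)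
  have cM: "card (monos_of (r-2)) = card (Pairs r)"
  proof -
    obtain k where k: "r = 2 + k" using r2 le_Suc_ex by blast
    have "2 * card (monos_of (r-2)) = 2 * card (Pairs r)"
      using card_monos[of "r-2"] card_Pairs[of r] by (simp add: k algebra_simps)
    then show ?thesis by simp
  qed
  obtain q where q: "\<exists>u\<in>U. q u \<noteq> 0" "\<forall>\<beta>\<in>monos_of (r-2). (\<Sum>u\<in>U. vec u \<beta> * q u) = 0"
    using lin_dep[OF finite_monos[of "r-2"] fU, where c="\<lambda>\<beta> u. vec u \<beta>"] cM cU by auto
  have homv: "homog (r-2) (vec u)" if "u \<in> U" for u using that sepH[of u] hh by (cases "u = (r,r)") (auto simp: vec_def U_def)
  define G where "G = (\<lambda>m. \<Sum>u\<in>U. q u * vec u m)"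
  have G0: "G m = 0" for m
  proof (cases "m \<in> monos_of (r-2)")
    case True then show ?thesis using q(2) by (simp add: G_def mult.commute)
  next
    case False
    then have "vec u m = 0" if "u \<in> U" for u using homogD[OF homv[OF that]] by (simp add: monos_of_def)
    then show ?thesis by (simp add: G_def)
  qed
  have hG: "heval (r-2) G v = (\<Sum>u\<in>U. q u * heval (r-2) (vec u) v)" for v
    unfolding G_def heval_sum heval_scale ..
  have qP: "q p = 0" if p: "p \<in> Pairs r" for p
  proof -
    have z: "heval (r-2) (vec u) (?P p) = 0" if "u \<in> U" "u \<noteq> p" for u
    proof (cases "u = (r,r)")
      case True then show ?thesis using van p by (simp add: vec_def)
    next
      case False
      then have u: "u \<in> Pairs r" using that by (simp add: U_def)
      then show ?thesis using sepV[OF u] sep_at_other[of "fst u" "snd u" r "fst p" "snd p" l] p that False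
        by (simp add: vec_def)
    qed
    have "0 = heval (r-2) G (?P p)" using G0 by (simp add: heval_def)
    also have "\<dots> = q p * heval (r-2) (vec p) (?P p)"
      unfolding hG using p fU z by (subst sum.remove[of _ p]) (auto simp: U_def intro!: sum.neutral)
    also have "\<dots> = q p * (\<Prod>k\<in>{..<r} - {fst p, snd p}. dot3 (l k) (?P p))"
      using sepV[OF p] p rP by (auto simp: vec_def)
    finally show ?thesis using sep_at_self[OF sl, of "fst p" "snd p"] p by simp
  qed
  then have qr: "q (r,r) \<noteq> 0" using q(1) by (auto simp: U_def)
  have z: "(\<Sum>u\<in>Pairs r. q u * vec u m) = 0" by (rule sum.neutral) (use qP in auto)
  have "G m = q (r,r) * vec (r,r) m + (\<Sum>u\<in>Pairs r. q u * vec u m)"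
    unfolding G_def U_def by (rule sum.insert[OF finite_Pairs rP])
  then have "G m = q (r,r) * h m" using z by (simp add: vec_def)
  then show ?thesis using G0 qr by simp
qed

lemma shift_pow:
  assumes "homog e g"
  shows "homog (e + s) ((shift 0 ^^ s) g) \<and> (\<forall>v. heval (e+s) ((shift 0 ^^ s) g) v = cmp 0 v ^ s * heval e g v)
     \<and> (\<forall>m. (shift 0 ^^ s) g ((inc 0 ^^ s) m) = g m)"
proof (induction s)
  case 0 then show ?case using assms by simp
next
  case (Suc s)
  define G where "G = (shift 0 ^^ s) g"
  have IH: "homog (e+s) G" "\<And>v. heval (e+s) G v = cmp 0 v ^ s * heval e g v" "\<And>m. G ((inc 0 ^^ s) m) = g m"
    using Suc unfolding G_def by auto
  have A: "homog (e + Suc s) (shift 0 G)" using homog_shift[OF IH(1)] by simp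
  have B: "heval (e + Suc s) (shift 0 G) v = cmp 0 v ^ Suc s * heval e g v" for v
    using heval_shift[OF IH(1), of 0 v] IH(2)[of v] by simp
  have C: "shift 0 G ((inc 0 ^^ Suc s) m) = g m" for m
    using IH(3)[of m] inc_facts(1,2)[of 0 "(inc 0 ^^ s) m"] by (simp add: shift_def)
  show ?case using A B C unfolding G_def by simp
qed

lemma A_key:
  assumes sl: "star_lines r l" and er: "e + 2 \<le> r" and hg: "homog e g"
    and van: "\<forall>v\<in>star_points r l. heval e g v = 0"
  shows "g m = 0"
proof -
  define s where "s = r - 2 - e"
  have es: "e + s = r - 2" using er s_def by simp
  obtain H where "H = (shift 0 ^^ s) g" by simp
  then have H: "homog (r-2) H" "\<forall>v. heval (r-2) H v = cmp 0 v ^ s * heval e g v" "\<forall>m. H ((inc 0 ^^ s) m) = g m"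
    using shift_pow[OF hg, of s] es by auto
  have H2: "heval (r-2) H x = cmp 0 x ^ s * heval e g x" for x using H(2) by blast
  have "\<forall>p\<in>Pairs r. heval (r-2) H (cross (l (fst p)) (l (snd p))) = 0"
  proof
    fix p assume "p \<in> Pairs r"
    then have "cross (l (fst p)) (l (snd p)) \<in> star_points r l" using cross_in_star[OF sl, of "fst p" "snd p"] by simp
    then show "heval (r-2) H (cross (l (fst p)) (l (snd p))) = 0" unfolding H2 using van by simp
  qed
  then have "H m' = 0" for m' using A0[OF sl _ H(1)] er by auto
  then show ?thesis using H(3) by metis
qed

lemma partA:
  assumes "d + 2 \<le> r" "homog d F"
  shows "\<exists>l. star_lines r l \<and> apolar (star_points r l) F"
proof (intro exI conjI)
  show sl: "star_lines r vl" by (rule star_vl)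
  show "apolar (star_points r vl) F"
    unfolding apolar_def
  proof (intro allI impI)
    fix e g assume hg: "homog e g" and van: "\<forall>v\<in>star_points r vl. heval e g v = 0"
    show "contract e g F = (\<lambda>_. 0)"
    proof (cases "e \<le> d")
      case True
      then have "g m = 0" for m using A_key[OF sl _ hg van] assms by simp
      then show ?thesis by (simp add: contract_def)
    next
      case False
      have "F (madd \<alpha> \<gamma>) = 0" if "\<alpha> \<in> monos_of e" for \<alpha> \<gamma>
      proof -
        have "mdeg (madd \<alpha> \<gamma>) \<noteq> d" using that False
          by (cases \<alpha>; cases \<gamma>) (auto simp: monos_of_def mdeg_def)
        then show ?thesis using assms(2) unfolding homog_def by blast
      qed
      then show ?thesis by (simp add: contract_def fun_eq_iff)
    qed
  qed
qed


fun fc :: "mon \<Rightarrow> complex" where "fc (a,b,c) = fact a * fact b * fact c"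

lemma fc_nz: "fc m \<noteq> 0"
  by (cases m) simp

definition pair :: "nat \<Rightarrow> form \<Rightarrow> form \<Rightarrow> complex" where
  "pair e g F = (\<Sum>\<alpha>\<in>monos_of e. g \<alpha> * (fc \<alpha> * F \<alpha>))"

lemma contract0: "contract e g F (0,0,0) = pair e g F"
  unfolding contract_def pair_def
  by (rule sum.cong) (auto simp: mult.assoc elim!: fc.elims)

lemma lin_sum:
  "(\<Sum>m\<in>M. (f m - (\<Sum>p\<in>S. a p * h p m)) * K m) = (\<Sum>m\<in>M. f m * K m) - (\<Sum>p\<in>S. a p * (\<Sum>m\<in>M. h p m * K m))"
  for K :: "'m \<Rightarrow> complex"
  by (simp add: algebra_simps sum_subtractf sum_distrib_left sum_distrib_right sum.swap[of _ S])

lemma smul3_smul3: "smul3 s (smul3 t v) = smul3 (s*t) v"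
  by (cases v) (simp add: algebra_simps)

lemma exists_w: "v \<noteq> (0,0,0) \<Longrightarrow> \<exists>w. dot3 w v \<noteq> 0"
proof -
  assume v: "v \<noteq> (0,0,0)"
  obtain a b c where abc: "v = (a,b,c)" by (cases v)
  show ?thesis
  proof (cases "a \<noteq> 0")
    case True then show ?thesis by (intro exI[of _ "(1,0,0)"]) (simp add: abc)
  next
    case False
    show ?thesis
    proof (cases "b \<noteq> 0")
      case True then show ?thesis by (intro exI[of _ "(0,1,0)"]) (simp add: abc)
    next
      case False': False
      then have "c \<noteq> 0" using v False abc by auto
      then show ?thesis by (intro exI[of _ "(0,0,1)"]) (simp add: abc)
    qed
  qed
qed

lemma vanish_cone:
  assumes sl: "star_lines r l" and van: "\<forall>p\<in>Pairs r. heval e g (cross (l (fst p)) (l (snd p))) = 0"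
  shows "\<forall>v\<in>star_points r l. heval e g v = 0"
proof
  fix v assume "v \<in> star_points r l"
  then obtain i j where ij: "i < r" "j < r" "i \<noteq> j" "dot3 (l i) v = 0" "dot3 (l j) v = 0"
    unfolding star_points_def by blast
  have "indep2 (l i) (l j)" using sl ij unfolding star_lines_def by blast
  from cone[OF ij(4,5) indep2_cross[OF this]] obtain t where t: "v = smul3 t (cross (l i) (l j))" by blast
  show "heval e g v = 0"
  proof (cases "i < j")
    case True
    then have "(i,j) \<in> Pairs r" using ij by (simp add: Pairs_def)
    then have "heval e g (cross (l i) (l j)) = 0" using van by (metis fst_conv snd_conv)
    then show ?thesis by (simp add: t heval_smul)
  next
    case False
    then have "(j,i) \<in> Pairs r" using ij by (simp add: Pairs_def)
    moreover have "v = smul3 (t * -1) (cross (l j) (l i))"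
      using t cross_swap[of "l j" "l i"] by (simp add: smul3_smul3)
    ultimately show ?thesis using van heval_smul by (metis fst_conv snd_conv mult_zero_right)
  qed
qed

lemma B1:
  assumes sl: "star_lines r l" and rd: "r \<le> d + 2" and hF: "homog d F"
    and ap: "apolar (star_points r l) F"
  shows "\<exists>c. \<forall>\<beta>\<in>monos_of d. F \<beta> = (\<Sum>p\<in>Pairs r. c p * (fact d / fc \<beta>) * mon_eval \<beta> (cross (l (fst p)) (l (snd p))))"
proof -
  let ?P = "\<lambda>p. cross (l (fst p)) (l (snd p))"
  have pz: "pair d g F = 0" if "homog d g" "\<forall>p\<in>Pairs r. heval d g (?P p) = 0" for g
  proof -
    have "contract d g F = (\<lambda>_. 0)"
      using ap that vanish_cone[OF sl that(2)] unfolding apolar_def by blast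
    then show ?thesis using contract0[of d g F] by simp
  qed
  have "\<forall>p\<in>Pairs r. \<exists>u. homog d u \<and> heval d u (?P p) \<noteq> 0 \<and> (\<forall>p'\<in>Pairs r. p' \<noteq> p \<longrightarrow> heval d u (?P p') = 0)"
  proof
    fix p assume p: "p \<in> Pairs r"
    then have p2: "(fst p, snd p) \<in> Pairs r" by simp
    have "indep2 (l (fst p)) (l (snd p))" using sl p unfolding star_lines_def Pairs_def by auto
    from exists_w[OF indep2_cross[OF this]] obtain w where w: "dot3 w (?P p) \<noteq> 0" by blast
    have rd': "r - 2 \<le> d" using rd by simp
    from separator[OF sl p2 rd', of w] obtain u where
      u1: "homog d u" and uv: "\<forall>v. heval d u v = (\<Prod>k\<in>{..<r} - {fst p, snd p}. dot3 (l k) v) * dot3 w v ^ (d - (r-2))"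
      by blast
    have u: "homog d u" "\<And>v. heval d u v = (\<Prod>k\<in>{..<r} - {fst p, snd p}. dot3 (l k) v) * dot3 w v ^ (d - (r-2))"
      using u1 uv by blast+
    have "heval d u (?P p) \<noteq> 0" using u(2) w sep_at_self[OF sl p2] by simp
    moreover have "heval d u (?P p') = 0" if "p' \<in> Pairs r" "p' \<noteq> p" for p'
      using u(2) sep_at_other[OF p2, of "fst p'" "snd p'" l] that by simp
    ultimately show "\<exists>u. homog d u \<and> heval d u (?P p) \<noteq> 0 \<and> (\<forall>p'\<in>Pairs r. p' \<noteq> p \<longrightarrow> heval d u (?P p') = 0)"
      using u(1) by blast
  qed
  then obtain u where u: "\<forall>p\<in>Pairs r. homog d (u p) \<and> heval d (u p) (?P p) \<noteq> 0 \<and> (\<forall>p'\<in>Pairs r. p' \<noteq> p \<longrightarrow> heval d (u p) (?P p') = 0)"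
    by (metis bchoice)
  have uH: "homog d (u p)" if "p \<in> Pairs r" for p using u that by blast
  have uS: "heval d (u p) (?P p) \<noteq> 0" if "p \<in> Pairs r" for p using u that by blast
  have uO: "heval d (u p) (?P p') = 0" if "p \<in> Pairs r" "p' \<in> Pairs r" "p' \<noteq> p" for p p' using u that by blast
  define c where "c = (\<lambda>p. pair d (u p) F / (fact d * heval d (u p) (?P p)))"
  have "F \<beta> = (\<Sum>p\<in>Pairs r. c p * (fact d / fc \<beta>) * mon_eval \<beta> (?P p))" if \<beta>: "\<beta> \<in> monos_of d" for \<beta>
  proof -
    define \<delta> :: form where "\<delta> = (\<lambda>m. if m = \<beta> then 1 else 0)"
    define a where "a = (\<lambda>p. mon_eval \<beta> (?P p) / heval d (u p) (?P p))"
    define g where "g = (\<lambda>m. \<delta> m - (\<Sum>p\<in>Pairs r. a p * u p m))"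
    have hd: "homog d \<delta>" using \<beta> by (auto simp: homog_def \<delta>_def monos_of_def)
    have hg: "homog d g" unfolding homog_def g_def
    proof (intro allI impI)
      fix m assume "mdeg m \<noteq> d"
      then have "(\<Sum>p\<in>Pairs r. a p * u p m) = 0"
        by (intro sum.neutral ballI) (simp add: homogD[OF uH])
      then show "\<delta> m - (\<Sum>p\<in>Pairs r. a p * u p m) = 0"
        using homogD[OF hd \<open>mdeg m \<noteq> d\<close>] by simp
    qed
    have hed: "heval d \<delta> x = mon_eval \<beta> x" for x
      unfolding heval_def \<delta>_def using \<beta> by (simp add: sum_single finite_monos)
    have heg: "heval d g x = mon_eval \<beta> x - (\<Sum>p\<in>Pairs r. a p * heval d (u p) x)" for x
      unfolding g_def heval_def lin_sum by (simp add: hed[unfolded heval_def])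
    have van: "\<forall>p\<in>Pairs r. heval d g (?P p) = 0"
    proof
      fix p assume p: "p \<in> Pairs r"
      have z: "(\<Sum>p'\<in>Pairs r - {p}. a p' * heval d (u p') (?P p)) = 0"
      proof (rule sum.neutral, rule ballI)
        fix p' assume "p' \<in> Pairs r - {p}"
        then show "a p' * heval d (u p') (?P p) = 0" using uO[of p' p] p by auto
      qed
      have "(\<Sum>p'\<in>Pairs r. a p' * heval d (u p') (?P p)) = a p * heval d (u p) (?P p)"
        using sum.remove[OF finite_Pairs p, of "\<lambda>p'. a p' * heval d (u p') (?P p)"] z by simp
      also have "\<dots> = mon_eval \<beta> (?P p)" using uS p by (simp add: a_def)
      finally show "heval d g (?P p) = 0" unfolding heg by simp
    qed
    have pd: "pair d \<delta> F = fc \<beta> * F \<beta>"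
      unfolding pair_def \<delta>_def using \<beta> by (simp add: sum_single finite_monos)
    have pu: "pair d (u p) F = c p * (fact d * heval d (u p) (?P p))" if "p \<in> Pairs r" for p
      using uS[OF that] by (simp add: c_def)
    have "0 = pair d g F" using pz[OF hg van] by simp
    also have "\<dots> = fc \<beta> * F \<beta> - (\<Sum>p\<in>Pairs r. a p * pair d (u p) F)"
      unfolding g_def pair_def lin_sum by (simp add: pd[unfolded pair_def])
    also have "(\<Sum>p\<in>Pairs r. a p * pair d (u p) F) = (\<Sum>p\<in>Pairs r. c p * fact d * mon_eval \<beta> (?P p))"
      by (rule sum.cong) (use uS pu in \<open>auto simp: a_def\<close>)
    finally have "fc \<beta> * F \<beta> = (\<Sum>p\<in>Pairs r. c p * fact d * mon_eval \<beta> (?P p))" by simp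
    then have "F \<beta> = (\<Sum>p\<in>Pairs r. c p * fact d * mon_eval \<beta> (?P p)) / fc \<beta>"
      using fc_nz[of \<beta>] by (simp add: field_simps)
    also have "\<dots> = (\<Sum>p\<in>Pairs r. c p * (fact d / fc \<beta>) * mon_eval \<beta> (?P p))"
      by (simp add: sum_divide_distrib)
    finally show ?thesis .
  qed
  then show ?thesis by blast
qed


definition mkline :: "nat \<Rightarrow> complex \<Rightarrow> complex \<Rightarrow> pt" where
  "mkline k a b = (if k = 0 then (1,a,b) else if k = 1 then (a,1,b) else (a,b,1))"
fun chart :: "pt \<Rightarrow> nat" where
  "chart (v0,v1,v2) = (if v0 \<noteq> 0 then 0 else if v1 \<noteq> 0 then 1 else 2)"
fun scl :: "pt \<Rightarrow> complex" where
  "scl (v0,v1,v2) = (if v0 \<noteq> 0 then v0 else if v1 \<noteq> 0 then v1 else v2)"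
fun na :: "pt \<Rightarrow> complex" where
  "na (v0,v1,v2) = (if v0 \<noteq> 0 then v1/v0 else if v1 \<noteq> 0 then v0/v1 else v0/v2)"
fun nb :: "pt \<Rightarrow> complex" where
  "nb (v0,v1,v2) = (if v0 \<noteq> 0 then v2/v0 else if v1 \<noteq> 0 then v2/v1 else v1/v2)"

lemma normalize: "v = smul3 (scl v) (mkline (chart v) (na v) (nb v))"
  by (cases v) (auto simp: mkline_def)

lemma chart_range: "chart v \<in> {0,1,2}"
  by (cases v) auto

definition VV :: "nat \<Rightarrow> (nat \<times> nat) set" where
  "VV r = Pairs r \<union> (\<lambda>i. (i,i)) ` {..<r} \<union> (\<lambda>i. (r+i,0)) ` {..<r}"

definition Lk :: "nat \<Rightarrow> (nat \<Rightarrow> nat) \<Rightarrow> (nat \<times> nat \<Rightarrow> complex) \<Rightarrow> nat \<Rightarrow> pt" where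
  "Lk r k x i = mkline (k i) (x (i,i)) (x (r+i,0))"

definition Psi :: "nat \<Rightarrow> nat \<Rightarrow> (nat \<Rightarrow> nat) \<Rightarrow> mon \<Rightarrow> (nat \<times> nat \<Rightarrow> complex) \<Rightarrow> complex" where
  "Psi r d k \<beta> x = (\<Sum>p\<in>Pairs r. x p * (fact d / fc \<beta>) * mon_eval \<beta> (cross (Lk r k x (fst p)) (Lk r k x (snd p))))"

definition Ch :: "nat \<Rightarrow> (nat \<Rightarrow> nat) set" where
  "Ch r = PiE {..<r} (\<lambda>_. {0,1,2})"

lemma B2:
  assumes sl: "star_lines r l" and rd: "r \<le> d + 2" and hF: "homog d F"
    and ap: "apolar (star_points r l) F"
  shows "\<exists>k\<in>Ch r. \<exists>x. \<forall>\<beta>\<in>monos_of d. F \<beta> = Psi r d k \<beta> x"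
proof -
  obtain c where c: "\<forall>\<beta>\<in>monos_of d. F \<beta> = (\<Sum>p\<in>Pairs r. c p * (fact d / fc \<beta>) * mon_eval \<beta> (cross (l (fst p)) (l (snd p))))"
    using B1[OF sl rd hF ap] by blast
  define k where "k = (\<lambda>i\<in>{..<r}. chart (l i))"
  define s where "s = (\<lambda>i. scl (l i))"
  define L where "L = (\<lambda>i. mkline (chart (l i)) (na (l i)) (nb (l i)))"
  define x where "x = (\<lambda>(i,j). if i < j then c (i,j) * (s i * s j) ^ d else if i = j then na (l i) else nb (l (i - r)))"
  have kC: "k \<in> Ch r" unfolding k_def Ch_def using chart_range by auto
  have lL: "l i = smul3 (s i) (L i)" for i unfolding s_def L_def by (rule normalize)
  have LK: "Lk r k x i = L i" if "i < r" for i
    using that unfolding Lk_def L_def k_def x_def by simp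
  have "F \<beta> = Psi r d k \<beta> x" if \<beta>: "\<beta> \<in> monos_of d" for \<beta>
  proof -
    have md: "mdeg \<beta> = d" using \<beta> by (simp add: monos_of_def)
    have "F \<beta> = (\<Sum>p\<in>Pairs r. c p * (fact d / fc \<beta>) * mon_eval \<beta> (cross (l (fst p)) (l (snd p))))"
      using c \<beta> by blast
    also have "\<dots> = Psi r d k \<beta> x"
      unfolding Psi_def
    proof (rule sum.cong[OF refl])
      fix p assume p: "p \<in> Pairs r"
      obtain i j where ij: "p = (i,j)" "i < j" "j < r" using p by (auto simp: Pairs_def)
      have "mon_eval \<beta> (cross (l i) (l j)) = (s i * s j) ^ d * mon_eval \<beta> (cross (L i) (L j))"
        unfolding lL cross_smul mon_eval_smul md ..
      moreover have "x p = c p * (s i * s j) ^ d" using ij by (simp add: x_def)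
      moreover have "Lk r k x i = L i" "Lk r k x j = L j" using ij LK by auto
      ultimately show "c p * (fact d / fc \<beta>) * mon_eval \<beta> (cross (l (fst p)) (l (snd p))) =
          x p * (fact d / fc \<beta>) * mon_eval \<beta> (cross (Lk r k x (fst p)) (Lk r k x (snd p)))"
        using ij by (simp add: algebra_simps)
    qed
    finally show ?thesis .
  qed
  then show ?thesis using kC by blast
qed

lemma finite_VV: "finite (VV r)"
  unfolding VV_def by (simp add: finite_Pairs)

lemma card_VV: "card (VV r) \<le> card (Pairs r) + r + r"
proof -
  define D where "D = (\<lambda>i. (i,i)) ` {..<r}"
  define S where "S = (\<lambda>i. (r+i,0::nat)) ` {..<r}"
  have c1: "card (VV r) \<le> card (Pairs r \<union> D) + card S"
    unfolding VV_def D_def S_def by (rule card_Un_le)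
  have c2: "card (Pairs r \<union> D) \<le> card (Pairs r) + card D" by (rule card_Un_le)
  have c3: "card D \<le> r" unfolding D_def using card_image_le[OF finite_lessThan[of r], of "\<lambda>i. (i,i)"] by simp
  have c4: "card S \<le> r" unfolding S_def using card_image_le[OF finite_lessThan[of r], of "\<lambda>i. (r+i,0::nat)"] by simp
  show ?thesis using c1 c2 c3 c4 by linarith
qed

lemma polyb_scale: "finite V \<Longrightarrow> polyb V E f \<Longrightarrow> polyb V E (\<lambda>x. a * f x)"
  using polyb_mult[of V 0 "\<lambda>x. a" E f] polyb_const[of V 0 a] by simp

lemma polyb_diff: "finite V \<Longrightarrow> polyb V E f \<Longrightarrow> polyb V E g \<Longrightarrow> polyb V E (\<lambda>x. f x - g x)"
  using polyb_add[of V E f "\<lambda>x. (-1) * g x"] polyb_scale[of V E g "-1"] by simp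

lemma cmp_mkline: "cmp m (mkline kk a b) = (if m = 0 then (if kk = 0 then 1 else a)
   else if m = 1 then (if kk = 0 then a else if kk = 1 then 1 else b) else (if kk = 0 \<or> kk = 1 then b else 1))"
proof -
  consider "m = 0" | "m = Suc 0" | j where "m = Suc (Suc j)" using nat3[of m] by blast
  then show ?thesis by cases (simp_all add: mkline_def)
qed

lemma Lk_cmp:
  assumes "i < r"
  shows "polyb (VV r) 1 (\<lambda>x. cmp m (Lk r k x i))"
proof -
  have V1: "(i,i) \<in> VV r" "(r+i,0) \<in> VV r" using assms by (auto simp: VV_def)
  have P: "polyb (VV r) 1 (\<lambda>x. 1)" "polyb (VV r) 1 (\<lambda>x. x (i,i))" "polyb (VV r) 1 (\<lambda>x. x (r+i,0))"
    using polyb_const[OF finite_VV] polyb_var[OF finite_VV V1(1)] polyb_var[OF finite_VV V1(2)] by auto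
  show ?thesis unfolding Lk_def cmp_mkline
    by (cases "m = 0"; cases "m = 1"; cases "k i = 0"; cases "k i = 1"; simp add: P[unfolded One_nat_def])
qed

lemma cross_cmp: "cross a b = (cmp 1 a * cmp 2 b - cmp 2 a * cmp 1 b, cmp 2 a * cmp 0 b - cmp 0 a * cmp 2 b, cmp 0 a * cmp 1 b - cmp 1 a * cmp 0 b)"
  by (cases a; cases b) (simp add: numeral_2_eq_2)

lemma mon_eval_cmp: "mon_eval (a,b,c) v = cmp 0 v ^ a * cmp 1 v ^ b * cmp 2 v ^ c"
  by (cases v) (simp add: numeral_2_eq_2)

lemma polyb_cross_cmp:
  assumes "i < r" "j < r"
  shows "polyb (VV r) 2 (\<lambda>x. cmp m (cross (Lk r k x i) (Lk r k x j)))"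
proof -
  have M: "polyb (VV r) 2 (\<lambda>x. cmp m1 (Lk r k x i) * cmp m2 (Lk r k x j))" for m1 m2
    using polyb_mult[OF finite_VV Lk_cmp[OF assms(1), of m1 k] Lk_cmp[OF assms(2), of m2 k]] by (simp only: one_add_one)
  have D: "polyb (VV r) 2 (\<lambda>x. cmp m1 (Lk r k x i) * cmp m2 (Lk r k x j) - cmp m3 (Lk r k x i) * cmp m4 (Lk r k x j))"
    for m1 m2 m3 m4 using polyb_diff[OF finite_VV M M] by simp
  show ?thesis using nat3[of m] D unfolding cross_cmp by (auto simp: numeral_2_eq_2)
qed

lemma polyb_Psi:
  assumes "\<beta> \<in> monos_of d"
  shows "polyb (VV r) (2*d+1) (Psi r d k \<beta>)"
proof -
  obtain a b c where abc: "\<beta> = (a,b,c)" by (cases \<beta>)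
  have d: "a + b + c = d" using assms abc by (simp add: monos_of_def mdeg_def)
  have tm: "polyb (VV r) (2*d+1) (\<lambda>x. x p * (fact d / fc \<beta>) * mon_eval \<beta> (cross (Lk r k x (fst p)) (Lk r k x (snd p))))"
    if p: "p \<in> Pairs r" for p
  proof -
    have ij: "fst p < r" "snd p < r" using p by (auto simp: Pairs_def)
    have pV: "p \<in> VV r" using p by (simp add: VV_def)
    let ?C = "\<lambda>m x. cmp m (cross (Lk r k x (fst p)) (Lk r k x (snd p)))"
    have C: "polyb (VV r) 2 (?C m)" for m using polyb_cross_cmp[OF ij] .
    have P: "polyb (VV r) (a*2 + b*2 + c*2) (\<lambda>x. ?C 0 x ^ a * ?C 1 x ^ b * ?C 2 x ^ c)"
      using polyb_mult[OF finite_VV polyb_mult[OF finite_VV polyb_power[OF finite_VV C] polyb_power[OF finite_VV C]] polyb_power[OF finite_VV C]]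
      by simp
    have e2: "a*2 + b*2 + c*2 = 2*d" using d by simp
    have ME: "polyb (VV r) (2*d) (\<lambda>x. mon_eval \<beta> (cross (Lk r k x (fst p)) (Lk r k x (snd p))))"
      unfolding abc mon_eval_cmp using P[unfolded e2] .
    have X: "polyb (VV r) 1 (\<lambda>x. x p * (fact d / fc \<beta>))"
      using polyb_mult[OF finite_VV polyb_var[OF finite_VV pV] polyb_const[OF finite_VV[of r], of 0 "fact d / fc \<beta>"]] by simp
    show ?thesis using polyb_mult[OF finite_VV X ME] by (simp add: algebra_simps)
  qed
  show ?thesis unfolding Psi_def[abs_def] using polyb_sum[OF finite_VV finite_Pairs] tm by simp
qed

lemma count_ineq:
  fixes n M D r :: nat
  assumes "n < M"
  defines "t \<equiv> 3^r * (M*D+1)^n + 1"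
  shows "3^r * (M*t*D + 1)^n < t^M"
proof -
  define K where "K = 3^r * (M*D+1)^n"
  have t: "t = K + 1" unfolding t_def K_def ..
  have t1: "1 \<le> t" using t by simp
  have "M*t*D + 1 \<le> t*(M*D+1)" using t1 by (simp add: algebra_simps)
  then have "(M*t*D + 1)^n \<le> (t*(M*D+1))^n" by (rule power_mono) simp
  also have "(t*(M*D+1))^n = t^n * (M*D+1)^n" by (rule power_mult_distrib)
  finally have "3^r * (M*t*D + 1)^n \<le> 3^r * (t^n * (M*D+1)^n)" by simp
  also have "\<dots> = K * t^n" unfolding K_def by (simp add: algebra_simps)
  also have "\<dots> < t * t^n" using t by simp
  also have "\<dots> = t^(n+1)" by simp
  also have "\<dots> \<le> t^M" using assms(1) t1 by (intro power_increasing) auto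
  finally show ?thesis .
qed

lemma partB:
  assumes rd: "r \<le> d"
  shows "\<exists>\<Phi>\<in>polyfun. (\<exists>F. homog d F \<and> \<Phi> F \<noteq> 0) \<and>
           (\<forall>F. homog d F \<and> \<Phi> F \<noteq> 0 \<longrightarrow> \<not> (\<exists>l. star_lines r l \<and> apolar (star_points r l) F))"
proof -
  define V where "V = VV r"
  define n where "n = card V"
  define M where "M = card (monos_of d)"
  define D where "D = 2*d+1"
  define t where "t = 3^r * (M*D+1)^n + 1"
  define A where "A = PiE (monos_of d) (\<lambda>_. {..<t})"
  define E where "E = M*t*D"
  define Eq where "Eq = Ch r \<times> Mon V E"
  have fV: "finite V" by (simp add: V_def finite_VV)
  have nM: "n < M"
  proof -
    have "2 * n \<le> 2 * card (Pairs r) + 4 * r" using card_VV[of r] unfolding n_def V_def by simp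
    also have "\<dots> = r * (r - 1) + 4 * r" using card_Pairs[of r] by simp
    also have "\<dots> = r * r + 3 * r" by (cases r) (auto simp: algebra_simps)
    also have "\<dots> \<le> d * d + 3 * d" using rd by (intro add_mono mult_le_mono) auto
    also have "\<dots> < (d+1)*(d+2)" by (simp add: algebra_simps)
    also have "\<dots> = 2 * M" using card_monos[of d] unfolding M_def by simp
    finally show ?thesis by simp
  qed
  have fA: "finite A" unfolding A_def using finite_monos by (intro finite_PiE) auto
  have cA: "card A = t^M" unfolding A_def M_def using finite_monos by (simp add: card_PiE)
  have fCh: "finite (Ch r)" unfolding Ch_def by (intro finite_PiE) auto
  have cCh: "card (Ch r) = 3^r" unfolding Ch_def by (simp add: card_PiE numeral_3_eq_3)
  have fEq: "finite Eq" unfolding Eq_def using fCh finite_Mon[OF fV] by simp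
  have cEq: "card Eq = 3^r * (E+1)^n" unfolding Eq_def using fCh finite_Mon[OF fV]
    by (simp add: card_cartesian_product cCh card_Mon[OF fV] n_def)
  have cnt: "card Eq < card A" unfolding cEq cA E_def t_def using count_ineq[OF nM] by simp
  define PF where "PF = (\<lambda>k a x. \<Prod>\<beta>\<in>monos_of d. Psi r d k \<beta> x ^ a \<beta>)"
  have polyPF: "polyb V E (PF k a)" if "a \<in> A" for k a
  proof -
    have pw: "\<forall>\<beta>\<in>monos_of d. polyb V (a \<beta> * D) (\<lambda>x. Psi r d k \<beta> x ^ a \<beta>)"
    proof
      fix \<beta> assume "\<beta> \<in> monos_of d"
      from polyb_power[OF fV polyb_Psi[OF this, of r k, folded V_def], of "a \<beta>"]
      show "polyb V (a \<beta> * D) (\<lambda>x. Psi r d k \<beta> x ^ a \<beta>)" by (simp add: D_def)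
    qed
    have "polyb V (\<Sum>\<beta>\<in>monos_of d. a \<beta> * D) (PF k a)"
      unfolding PF_def[abs_def] using polyb_prod[OF fV finite_monos[of d] pw] .
    moreover have "(\<Sum>\<beta>\<in>monos_of d. a \<beta> * D) \<le> E"
    proof -
      have "(\<Sum>\<beta>\<in>monos_of d. a \<beta> * D) \<le> (\<Sum>\<beta>\<in>monos_of d. t * D)"
        using that unfolding A_def by (intro sum_mono mult_le_mono1) (auto simp: PiE_iff less_imp_le)
      then show ?thesis by (simp add: E_def M_def)
    qed
    ultimately show ?thesis using polyb_mono[OF fV] by blast
  qed
  have "\<forall>ka\<in>Ch r \<times> A. \<exists>C. \<forall>x. PF (fst ka) (snd ka) x = (\<Sum>e\<in>Mon V E. C e * mmono V e x)"
  proof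
    fix ka assume "ka \<in> Ch r \<times> A"
    then have "snd ka \<in> A" by (cases ka) simp
    then have "polyb V E (PF (fst ka) (snd ka))" by (rule polyPF)
    then show "\<exists>C. \<forall>x. PF (fst ka) (snd ka) x = (\<Sum>e\<in>Mon V E. C e * mmono V e x)"
      unfolding polyb_def .
  qed
  from bchoice[OF this] obtain CC where CC: "\<forall>ka\<in>Ch r \<times> A. \<forall>x. PF (fst ka) (snd ka) x = (\<Sum>e\<in>Mon V E. CC ka e * mmono V e x)"
    by blast
  obtain q where q: "\<exists>a\<in>A. q a \<noteq> 0" "\<forall>ke\<in>Eq. (\<Sum>a\<in>A. CC (fst ke, a) (snd ke) * q a) = 0"
    using lin_dep[OF fEq fA cnt, where c="\<lambda>ke a. CC (fst ke, a) (snd ke)"] by blast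
  define \<Phi> where "\<Phi> = (\<lambda>F::form. \<Sum>a\<in>A. q a * (\<Prod>\<beta>\<in>monos_of d. F \<beta> ^ a \<beta>))"
  have pf: "\<Phi> \<in> polyfun"
    unfolding \<Phi>_def
    by (intro polyfun_sum fA ballI pf_mult[OF pf_const] polyfun_prod finite_monos polyfun_power pf_coord)
  have zero: "\<Phi> F = 0" if "k \<in> Ch r" "\<forall>\<beta>\<in>monos_of d. F \<beta> = Psi r d k \<beta> x" for k F x
  proof -
    have "\<Phi> F = (\<Sum>a\<in>A. q a * PF k a x)"
      unfolding \<Phi>_def PF_def using that(2) by (intro sum.cong refl arg_cong2[where f="(*)"] prod.cong) auto
    also have "\<dots> = (\<Sum>a\<in>A. q a * (\<Sum>e\<in>Mon V E. CC (k,a) e * mmono V e x))"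
      using CC that(1) by (intro sum.cong refl) auto
    also have "\<dots> = (\<Sum>e\<in>Mon V E. (\<Sum>a\<in>A. CC (k,a) e * q a) * mmono V e x)"
      by (simp add: sum_distrib_left sum_distrib_right sum.swap[of _ A] algebra_simps)
    also have "\<dots> = 0"
      using q(2) that(1) unfolding Eq_def by (intro sum.neutral ballI) auto
    finally show ?thesis .
  qed
  have ex: "\<exists>F. homog d F \<and> \<Phi> F \<noteq> 0"
  proof -
    obtain a0 where a0: "a0 \<in> A" "q a0 \<noteq> 0" using q(1) by blast
    have "\<not> (\<forall>x. (\<Sum>a\<in>A. q a * (\<Prod>\<beta>\<in>monos_of d. x \<beta> ^ a \<beta>)) = 0)"
      using poly_ident[OF finite_monos[of d], where q=q and t=t] a0 unfolding A_def by blast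
    then obtain x where x: "(\<Sum>a\<in>A. q a * (\<Prod>\<beta>\<in>monos_of d. x \<beta> ^ a \<beta>)) \<noteq> 0" by blast
    define F where "F = (\<lambda>\<beta>. if \<beta> \<in> monos_of d then x \<beta> else 0)"
    have "homog d F" unfolding F_def homog_def monos_of_def by simp
    moreover have "\<Phi> F = (\<Sum>a\<in>A. q a * (\<Prod>\<beta>\<in>monos_of d. x \<beta> ^ a \<beta>))"
      unfolding \<Phi>_def F_def by (intro sum.cong refl arg_cong2[where f="(*)"] prod.cong) auto
    ultimately show ?thesis using x by auto
  qed
  have no: "\<not> (\<exists>l. star_lines r l \<and> apolar (star_points r l) F)" if "homog d F" "\<Phi> F \<noteq> 0" for F
  proof
    assume "\<exists>l. star_lines r l \<and> apolar (star_points r l) F"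
    then obtain l where l: "star_lines r l" "apolar (star_points r l) F" by blast
    have rd2: "r \<le> d + 2" using rd by simp
    from B2[OF l(1) rd2 that(1) l(2)] obtain k x where kx: "k \<in> Ch r" "\<forall>\<beta>\<in>monos_of d. F \<beta> = Psi r d k \<beta> x"
      by blast
    have "\<Phi> F = 0" by (rule zero[OF kx])
    then show False using that(2) by simp
  qed
  show ?thesis
  proof (rule bexI[OF _ pf], rule conjI)
    show "\<exists>F. homog d F \<and> \<Phi> F \<noteq> 0" by (rule ex)
    show "\<forall>F. homog d F \<and> \<Phi> F \<noteq> 0 \<longrightarrow> \<not> (\<exists>l. star_lines r l \<and> apolar (star_points r l) F)"
      using no by blast
  qed
qed


theorem proposition3p5:
  fixes d r :: nat
  assumes "3 \<le> d"
  shows "general d (\<lambda>F.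
           (d + 2 \<le> r \<longrightarrow> (\<exists>l. star_lines r l \<and> apolar (star_points r l) F)) \<and>
           (r \<le> d \<longrightarrow> \<not> (\<exists>l. star_lines r l \<and> apolar (star_points r l) F)))"
proof (cases "r \<le> d")
  case True
  from partB[OF True] obtain \<Phi> where \<Phi>: "\<Phi> \<in> polyfun" "\<exists>F. homog d F \<and> \<Phi> F \<noteq> 0"
    "\<forall>F. homog d F \<and> \<Phi> F \<noteq> 0 \<longrightarrow> \<not> (\<exists>l. star_lines r l \<and> apolar (star_points r l) F)"
    by blast
  have nr: "\<not> (d + 2 \<le> r)" using True by simp
  show ?thesis unfolding general_def
  proof (rule bexI[OF _ \<Phi>(1)], rule conjI)
    show "\<exists>F. homog d F \<and> \<Phi> F \<noteq> 0" by (rule \<Phi>(2))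
    show "\<forall>F. homog d F \<and> \<Phi> F \<noteq> 0 \<longrightarrow>
        (d + 2 \<le> r \<longrightarrow> (\<exists>l. star_lines r l \<and> apolar (star_points r l) F)) \<and>
        (r \<le> d \<longrightarrow> \<not> (\<exists>l. star_lines r l \<and> apolar (star_points r l) F))"
      using \<Phi>(3) nr by blast
  qed
next
  case False
  show ?thesis unfolding general_def
  proof (rule bexI[OF _ pf_const[of 1]], rule conjI)
    have "homog d (\<lambda>_. 0)" by (simp add: homog_def)
    then show "\<exists>F. homog d F \<and> (1::complex) \<noteq> 0" by (intro exI[of _ "\<lambda>_. 0"] conjI) simp_all
    show "\<forall>F. homog d F \<and> (1::complex) \<noteq> 0 \<longrightarrow>
        (d + 2 \<le> r \<longrightarrow> (\<exists>l. star_lines r l \<and> apolar (star_points r l) F)) \<and>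
        (r \<le> d \<longrightarrow> \<not> (\<exists>l. star_lines r l \<and> apolar (star_points r l) F))"
      using partA False by blast
  qed
qed

end
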